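(* Let $\epsilon\in(0,1)$ and $\mathcal{Z}^{(1)},\dots,\mathcal{Z}^{(p)}\in\mathbb{C}^{n_1\times\cdots\times n_d}$. Set $\mathcal{Z}^{(0,t)}:=\mathcal{Z}^{(t)}$ for $t\in[p]$. Inductively for $j=1,\dots,d$: let $\mathbf{A}_j\in\mathbb{C}^{m_j\times n_j}$ be an $(\epsilon/(ed))$-JL embedding into $\mathbb{C}^{m_j}$ of the set $\mathcal{S}_j$ consisting of all mode-$j$ fibers of all the tensors $\mathcal{Z}^{(j-1,t)}\in\mathbb{C}^{m_1\times\cdots\times m_{j-1}\times n_j\times\cdots\times n_d}$, $t\in[p]$ (i.e., all vectors $\mathcal{Z}^{(j-1,t)}_{i_1,\dots,i_{j-1},:,i_{j+1},\dots,i_d}\in\mathbb{C}^{n_j}$ with $i_\ell\in[m_\ell]$ for $\ell<j$ and $i_\ell\in[n_\ell]$ for $\ell>j$), and then set $\mathcal{Z}^{(j,t)}:=\mathcal{Z}^{(j-1,t)}\times_j\mathbf{A}_j$. Then for all $t\in[p]$, $$\big|\|\mathcal{Z}^{(t)}\|^2-\|\mathcal{Z}^{(t)}\times_1\mathbf{A}_1\cdots\times_d\mathbf{A}_d\|^2\big|\le\epsilon\|\mathcal{Z}^{(t)}\|^2 .$$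
   Context: $\|\cdot\|$ is the Euclidean norm of a tensor (square root of the sum of squared absolute values of entries); $e$ is Euler's number. The $j$-mode product is $(\mathcal{Z}\times_j\mathbf{U})_{i_1,\dots,\ell,\dots,i_d}=\sum_{i_j}\mathcal{Z}_{i_1,\dots,i_j,\dots,i_d}\mathbf{U}_{\ell,i_j}$. A mode-$j$ fiber of a tensor is the vector obtained by fixing all indices except the $j$-th. A matrix $\mathbf{A}$ is an $\epsilon$-JL embedding of $S$ if $\|\mathbf{A}x\|_2^2=(1+\epsilon_x)\|x\|_2^2$ with $\epsilon_x\in(-\epsilon,\epsilon)$ for all $x\in S$. *)

theory Defs
  imports Complex_Main
begin

text \<open>Conventions: modes are 0-based (mode j in the paper is j-1 here).
  An order-d tensor with dimension function dims is a function from index tuples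
  (nat => nat) to complex numbers; only indices in tidx dims d are meaningful.
  Vectors in C^n are functions nat => complex (only entries r < n meaningful),
  matrices in C^(m x n) are functions nat => nat => complex, entry (l, r).\<close>

type_synonym tensor = "(nat \<Rightarrow> nat) \<Rightarrow> complex"
type_synonym cmat = "nat \<Rightarrow> nat \<Rightarrow> complex"

definition tidx :: "(nat \<Rightarrow> nat) \<Rightarrow> nat \<Rightarrow> (nat \<Rightarrow> nat) set" where
  "tidx dims d = {i. (\<forall>l<d. i l < dims l) \<and> (\<forall>l\<ge>d. i l = 0)}"

definition tnorm2 :: "(nat \<Rightarrow> nat) \<Rightarrow> nat \<Rightarrow> tensor \<Rightarrow> real" where
  "tnorm2 dims d Z = (\<Sum>i\<in>tidx dims d. (cmod (Z i))\<^sup>2)"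

definition vnorm2 :: "nat \<Rightarrow> (nat \<Rightarrow> complex) \<Rightarrow> real" where
  "vnorm2 n x = (\<Sum>r<n. (cmod (x r))\<^sup>2)"

definition mat_vec :: "nat \<Rightarrow> cmat \<Rightarrow> (nat \<Rightarrow> complex) \<Rightarrow> (nat \<Rightarrow> complex)" where
  "mat_vec n A x = (\<lambda>l. \<Sum>r<n. A l r * x r)"

definition JL_embedding :: "real \<Rightarrow> nat \<Rightarrow> nat \<Rightarrow> cmat \<Rightarrow> (nat \<Rightarrow> complex) set \<Rightarrow> bool" where
  "JL_embedding eps m n A S \<longleftrightarrow>
     (\<forall>x\<in>S. \<exists>ex. -eps < ex \<and> ex < eps \<and> vnorm2 m (mat_vec n A x) = (1 + ex) * vnorm2 n x)"

definition mode_prod :: "nat \<Rightarrow> nat \<Rightarrow> tensor \<Rightarrow> cmat \<Rightarrow> tensor" where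
  "mode_prod j k Z U = (\<lambda>i. \<Sum>r<k. Z (i(j := r)) * U (i j) r)"

fun mode_prods :: "(nat \<Rightarrow> nat) \<Rightarrow> (nat \<Rightarrow> cmat) \<Rightarrow> tensor \<Rightarrow> nat \<Rightarrow> tensor" where
  "mode_prods n A Z 0 = Z"
| "mode_prods n A Z (Suc j) = mode_prod j (n j) (mode_prods n A Z j) (A j)"

definition dims_after :: "(nat \<Rightarrow> nat) \<Rightarrow> (nat \<Rightarrow> nat) \<Rightarrow> nat \<Rightarrow> nat \<Rightarrow> nat" where
  "dims_after m n j = (\<lambda>l. if l < j then m l else n l)"

definition fiber :: "nat \<Rightarrow> nat \<Rightarrow> tensor \<Rightarrow> (nat \<Rightarrow> nat) \<Rightarrow> (nat \<Rightarrow> complex)" where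
  "fiber j k W i = (\<lambda>r. if r < k then W (i(j := r)) else 0)"

definition fibers :: "(nat \<Rightarrow> nat) \<Rightarrow> nat \<Rightarrow> nat \<Rightarrow> tensor \<Rightarrow> (nat \<Rightarrow> complex) set" where
  "fibers dims d j W = fiber j (dims j) W ` tidx dims d"

end

theory Submission
  imports Defs
begin

lemma tidx_split:
  assumes "j < d"
  shows "sum f (tidx D d) = (\<Sum>b\<in>tidx (D(j:=1)) d. \<Sum>r<D j. f (b(j:=r)))"
proof -
  have "sum f (tidx D d) = sum (\<lambda>(b,r). f (b(j:=r))) (tidx (D(j:=1)) d \<times> {..<D j})"
    by (rule sum.reindex_bij_witness[where j = "\<lambda>i. (i(j:=0), i j)" and i = "\<lambda>(b,r). b(j:=r)"])
       (use assms in \<open>fastforce simp: tidx_def fun_eq_iff\<close>)+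
  also have "\<dots> = (\<Sum>b\<in>tidx (D(j:=1)) d. \<Sum>r<D j. f (b(j:=r)))"
    by (simp add: sum.cartesian_product)
  finally show ?thesis .
qed

lemma JL_mono: "JL_embedding e m n A S \<Longrightarrow> T \<subseteq> S \<Longrightarrow> JL_embedding e m n A T"
  unfolding JL_embedding_def by blast

lemma step:
  assumes "j < d" "0 < e"
    and JL: "JL_embedding e (m j) (n j) (A j) (fibers (dims_after m n j) d j W)"
  shows "\<bar>tnorm2 (dims_after m n (Suc j)) d (mode_prod j (n j) W (A j)) - tnorm2 (dims_after m n j) d W\<bar>
     \<le> e * tnorm2 (dims_after m n j) d W"
proof -
  define B where "B = tidx ((dims_after m n j)(j:=1)) d"
  have B2: "B = tidx ((dims_after m n (Suc j))(j:=1)) d"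
    unfolding B_def by (rule arg_cong[where f="\<lambda>D. tidx D d"]) (auto simp: dims_after_def)
  define x where "x b = fiber j (n j) W b" for b
  have N0: "tnorm2 (dims_after m n j) d W = (\<Sum>b\<in>B. vnorm2 (n j) (x b))"
    unfolding tnorm2_def B_def tidx_split[OF assms(1), of _ "dims_after m n j"]
    by (simp add: vnorm2_def x_def fiber_def dims_after_def)
  have N1: "tnorm2 (dims_after m n (Suc j)) d (mode_prod j (n j) W (A j)) = (\<Sum>b\<in>B. vnorm2 (m j) (mat_vec (n j) (A j) (x b)))"
    unfolding tnorm2_def B2 tidx_split[OF assms(1), of _ "dims_after m n (Suc j)"]
    by (simp add: vnorm2_def x_def fiber_def dims_after_def mode_prod_def mat_vec_def mult.commute)
  have each: "\<bar>vnorm2 (m j) (mat_vec (n j) (A j) (x b)) - vnorm2 (n j) (x b)\<bar> \<le> e * vnorm2 (n j) (x b)"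
    if b: "b \<in> B" for b
  proof (cases "n j = 0")
    case True
    then show ?thesis by (simp add: vnorm2_def mat_vec_def)
  next
    case False
    have "b \<in> tidx (dims_after m n j) d"
      using b False assms(1) unfolding B_def tidx_def by (auto simp: dims_after_def split: if_splits)
    then have "x b \<in> fibers (dims_after m n j) d j W"
      unfolding fibers_def x_def by (simp add: dims_after_def)
    then obtain ex where ex: "-e < ex" "ex < e" "vnorm2 (m j) (mat_vec (n j) (A j) (x b)) = (1 + ex) * vnorm2 (n j) (x b)"
      using JL unfolding JL_embedding_def by blast
    have v0: "0 \<le> vnorm2 (n j) (x b)" unfolding vnorm2_def by (simp add: sum_nonneg)
    have "\<bar>ex * vnorm2 (n j) (x b)\<bar> \<le> e * vnorm2 (n j) (x b)"
      using ex v0 by (simp add: abs_mult mult_right_mono)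
    then show ?thesis using ex(3) by (simp add: algebra_simps)
  qed
  have "\<bar>(\<Sum>b\<in>B. vnorm2 (m j) (mat_vec (n j) (A j) (x b))) - (\<Sum>b\<in>B. vnorm2 (n j) (x b))\<bar>
      = \<bar>\<Sum>b\<in>B. vnorm2 (m j) (mat_vec (n j) (A j) (x b)) - vnorm2 (n j) (x b)\<bar>"
    by (simp add: sum_subtractf)
  also have "\<dots> \<le> (\<Sum>b\<in>B. \<bar>vnorm2 (m j) (mat_vec (n j) (A j) (x b)) - vnorm2 (n j) (x b)\<bar>)"
    by (rule sum_abs)
  also have "\<dots> \<le> (\<Sum>b\<in>B. e * vnorm2 (n j) (x b))"
    by (rule sum_mono) (rule each)
  also have "\<dots> = e * (\<Sum>b\<in>B. vnorm2 (n j) (x b))" by (simp add: sum_distrib_left)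
  finally show ?thesis using N0 N1 by simp
qed


lemma powbounds:
  fixes eps :: real and d :: nat
  assumes "0 < eps" "eps < 1" "0 < d"
  defines "dl \<equiv> eps / (exp 1 * real d)"
  shows "1 - eps \<le> (1 - dl)^d" "(1 + dl)^d \<le> 1 + eps" "0 < dl" "dl < 1"
proof -
  have e2: "2 \<le> exp (1::real)" using exp_ge_add_one_self[of 1] by simp
  have dd: "real d * dl = eps / exp 1" unfolding dl_def using assms(3) by (simp add: field_simps)
  have ee: "eps / exp 1 \<le> eps" using e2 assms(1) by (simp add: divide_le_eq)
  have ee2: "eps / exp 1 < 1" using ee assms(2) by linarith
  show dp: "0 < dl" unfolding dl_def using assms by simp
  have "dl \<le> real d * dl" using dp assms(3) by simp
  then show dl1: "dl < 1" using dd ee2 by linarith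
  have B: "1 - eps / exp 1 \<le> (1 - dl)^d"
    using Bernoulli_inequality[of "-dl" d] dl1 dd by simp
  then show "1 - eps \<le> (1 - dl)^d" using ee by linarith
  have "(1 + dl)^d * (1 - dl)^d = (1 - dl^2)^d" by (simp add: power_mult_distrib[symmetric] power2_eq_square algebra_simps)
  also have "\<dots> \<le> 1" using dl1 dp by (intro power_le_one) (auto simp: power2_eq_square mult_le_one less_imp_le)
  finally have P: "(1 + dl)^d * (1 - dl)^d \<le> 1" .
  have pos: "0 < 1 - eps / exp 1" using ee2 by simp
  have "(1 + eps) * (1 - eps / exp 1) \<ge> 1"
  proof -
    have "eps * (1 + eps) / exp 1 \<le> eps"
      using e2 assms(1,2) by (simp add: divide_le_eq)
    then show ?thesis by (simp add: algebra_simps)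
  qed
  have "(1 + dl)^d * (1 - eps / exp 1) \<le> (1 + dl)^d * (1 - dl)^d"
    using B dp by (intro mult_left_mono) auto
  also have "\<dots> \<le> 1" by (rule P)
  also have "\<dots> \<le> (1 + eps) * (1 - eps / exp 1)" by fact
  finally show "(1 + dl)^d \<le> 1 + eps" using pos by simp
qed

theorem lemma12:
  fixes eps :: real and d p :: nat and n m :: "nat \<Rightarrow> nat"
    and Z :: "nat \<Rightarrow> tensor" and A :: "nat \<Rightarrow> cmat"
  assumes "0 < eps" "eps < 1"
    and "\<And>j. j < d \<Longrightarrow> JL_embedding (eps / (exp 1 * real d)) (m j) (n j) (A j)
            (\<Union>t<p. fibers (dims_after m n j) d j (mode_prods n A (Z t) j))"
  shows "\<forall>t<p. \<bar>tnorm2 n d (Z t) - tnorm2 m d (mode_prods n A (Z t) d)\<bar>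
                 \<le> eps * tnorm2 n d (Z t)"
proof (intro allI impI)
  fix t assume t: "t < p"
  define N where "N j = tnorm2 (dims_after m n j) d (mode_prods n A (Z t) j)" for j
  have tid: "tidx (dims_after m n d) d = tidx m d" unfolding tidx_def dims_after_def by auto
  have Nd: "N d = tnorm2 m d (mode_prods n A (Z t) d)" unfolding N_def tnorm2_def tid ..
  have "dims_after m n 0 = n" unfolding dims_after_def by auto
  then have N0: "N 0 = tnorm2 n d (Z t)" unfolding N_def by simp
  have nn: "0 \<le> N 0" unfolding N0 tnorm2_def by (simp add: sum_nonneg)
  show "\<bar>tnorm2 n d (Z t) - tnorm2 m d (mode_prods n A (Z t) d)\<bar> \<le> eps * tnorm2 n d (Z t)"
  proof (cases "d = 0")
    case True
    then show ?thesis using nn N0 Nd assms(1) by simp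
  next
    case False
    define dl where "dl = eps / (exp 1 * real d)"
    have dpos: "0 < d" using False by simp
    note pb = powbounds[OF assms(1,2) dpos, folded dl_def]
    have stepj: "\<bar>N (Suc j) - N j\<bar> \<le> dl * N j" if j: "j < d" for j
    proof -
      have "JL_embedding dl (m j) (n j) (A j) (fibers (dims_after m n j) d j (mode_prods n A (Z t) j))"
        unfolding dl_def by (rule JL_mono[OF assms(3)[OF j]]) (use t in blast)
      from step[where m=m and n=n and A=A and W="mode_prods n A (Z t) j", OF j pb(3) this] show ?thesis unfolding N_def by simp
    qed
    have ind: "j \<le> d \<longrightarrow> (1 - dl)^j * N 0 \<le> N j \<and> N j \<le> (1 + dl)^j * N 0" for j
    proof (induction j)
      case 0 then show ?case by simp
    next
      case (Suc j)
      show ?case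
      proof
        assume "Suc j \<le> d"
        then have h: "(1 - dl)^j * N 0 \<le> N j" "N j \<le> (1 + dl)^j * N 0" and s: "\<bar>N (Suc j) - N j\<bar> \<le> dl * N j"
          using Suc stepj by auto
        have l: "(1 - dl) * N j \<le> N (Suc j)" "N (Suc j) \<le> (1 + dl) * N j" using s by (auto simp: algebra_simps)
        have "(1 - dl)^(Suc j) * N 0 = (1 - dl) * ((1 - dl)^j * N 0)" by simp
        also have "\<dots> \<le> (1 - dl) * N j" using h(1) pb False by (intro mult_left_mono) auto
        finally have a: "(1 - dl)^(Suc j) * N 0 \<le> N (Suc j)" using l(1) by linarith
        have "(1 + dl) * N j \<le> (1 + dl) * ((1 + dl)^j * N 0)" using h(2) pb False by (intro mult_left_mono) auto
        then have b: "N (Suc j) \<le> (1 + dl)^(Suc j) * N 0" using l(2) by simp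
        show "(1 - dl)^(Suc j) * N 0 \<le> N (Suc j) \<and> N (Suc j) \<le> (1 + dl)^(Suc j) * N 0" using a b by simp
      qed
    qed
    from ind[of d] have h: "(1 - dl)^d * N 0 \<le> N d" "N d \<le> (1 + dl)^d * N 0" by auto
    have "(1 - eps) * N 0 \<le> (1 - dl)^d * N 0" using pb False nn by (intro mult_right_mono) auto
    moreover have "(1 + dl)^d * N 0 \<le> (1 + eps) * N 0" using pb False nn by (intro mult_right_mono) auto
    ultimately show ?thesis using h N0 Nd by (simp add: abs_le_iff algebra_simps)
  qed
qed

end
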